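(* There are constants $c>0$ and $\lambda\geq 1$ such that for all sufficiently large $n$ and all parameters $r\ge 0$, $0<\epsilon\leq 1$, $R$ with $\epsilon<R$ and $c\sqrt{\log n}\leq R\leq\sqrt n$ the following holds. Let $m=\lceil\sqrt{5n}/R\rceil$ and partition the square $[0,\sqrt n]^2$ into $m\times m$ congruent square cells. If the positions $P_{1},\dots,P_{n}$ of the $n$ nodes are independent, each distributed according to the stationary distribution $\pi$ of the single-node random walk on $M_{n,r,\epsilon}$, then with probability at least $1-1/n^2$, every cell contains at least $R^2/\lambda$ and at most $\lambda R^2$ nodes.
   Context: $L_{n,\epsilon}=\{(i\epsilon,j\epsilon): i,j\in\mathbb{N},\ i,j\le\sqrt n/\epsilon\}$. The move graph $M_{n,r,\epsilon}$ has vertex set $L_{n,\epsilon}$ and edges between $\mathbf{x},\mathbf{y}$ with Euclidean distance $d(\mathbf{x},\mathbf{y})\le r$; $\Gamma(\mathbf{x})=\{\mathbf{y}\in L_{n,\epsilon}: d(\mathbf{x},\mathbf{y})\le r\}$ (it contains $\mathbf{x}$). Each node moves by a Markov chain: from position $\mathbf{x}$ it moves to a uniformly random point of $\Gamma(\mathbf{x})$. Its stationary distribution is $\pi(\mathbf{x})=|\Gamma(\mathbf{x})|/\sum_{\mathbf{y}\in L_{n,\epsilon}}|\Gamma(\mathbf{y})|$. A node belongs to a cell if its position lies in the cell (for points on cell boundaries, each point of $L_{n,\epsilon}$ is assigned to exactly one cell). *)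

theory Defs
  imports "HOL-Analysis.Analysis"
begin

definition lattice :: "nat \<Rightarrow> real \<Rightarrow> (real \<times> real) set" where
  "lattice n \<epsilon> = {(real i * \<epsilon>, real j * \<epsilon>) | i j :: nat.
       real i \<le> sqrt (real n) / \<epsilon> \<and> real j \<le> sqrt (real n) / \<epsilon>}"

definition edist :: "real \<times> real \<Rightarrow> real \<times> real \<Rightarrow> real" where
  "edist x y = sqrt ((fst x - fst y)^2 + (snd x - snd y)^2)"

definition Gamma :: "nat \<Rightarrow> real \<Rightarrow> real \<Rightarrow> real \<times> real \<Rightarrow> (real \<times> real) set" where
  "Gamma n r \<epsilon> x = {y \<in> lattice n \<epsilon>. edist x y \<le> r}"

definition stat_dist :: "nat \<Rightarrow> real \<Rightarrow> real \<Rightarrow> real \<times> real \<Rightarrow> real" where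
  "stat_dist n r \<epsilon> x =
     real (card (Gamma n r \<epsilon> x)) / (\<Sum>y\<in>lattice n \<epsilon>. real (card (Gamma n r \<epsilon> y)))"

definition num_cells :: "nat \<Rightarrow> real \<Rightarrow> nat" where
  "num_cells n R = nat \<lceil>sqrt (5 * real n) / R\<rceil>"

definition cell_set :: "nat \<Rightarrow> nat \<Rightarrow> nat \<times> nat \<Rightarrow> (real \<times> real) set" where
  "cell_set n m ab =
     (let s = sqrt (real n) / real m in
       {real (fst ab) * s .. real (fst ab + 1) * s} \<times> {real (snd ab) * s .. real (snd ab + 1) * s})"

definition valid_assignment :: "nat \<Rightarrow> real \<Rightarrow> nat \<Rightarrow> (real \<times> real \<Rightarrow> nat \<times> nat) \<Rightarrow> bool" where
  "valid_assignment n \<epsilon> m cell \<longleftrightarrow>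
     (\<forall>x\<in>lattice n \<epsilon>. fst (cell x) < m \<and> snd (cell x) < m \<and> x \<in> cell_set n m (cell x))"

definition cell_count :: "nat \<Rightarrow> (real \<times> real \<Rightarrow> nat \<times> nat) \<Rightarrow> (nat \<Rightarrow> real \<times> real) \<Rightarrow> nat \<times> nat \<Rightarrow> nat" where
  "cell_count n cell P ab = card {i \<in> {..<n}. cell (P i) = ab}"

text \<open>Probability of an event on the positions, when P_0..P_{n-1} are i.i.d. with law pi
  (product distribution on the finite set of configurations).\<close>
definition config_prob :: "nat \<Rightarrow> real \<Rightarrow> real \<Rightarrow> ((nat \<Rightarrow> real \<times> real) \<Rightarrow> bool) \<Rightarrow> real" where
  "config_prob n r \<epsilon> E =
     (\<Sum>P \<in> {P \<in> PiE {..<n} (\<lambda>_. lattice n \<epsilon>). E P}. \<Prod>i<n. stat_dist n r \<epsilon> (P i))"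

end

theory Submission
  imports Defs "HOL-Library.FuncSet"
begin


lemma sum_PiE_prod_pow:
  fixes f :: "'a \<Rightarrow> real"
  assumes "finite L"
  shows "(\<Sum>P\<in>PiE {..<n} (\<lambda>_. L). \<Prod>i<n. f (P i)) = (\<Sum>x\<in>L. f x) ^ n"
  using prod_sum_PiE[of "{..<n}" "\<lambda>_. L" "\<lambda>_ x. f x"] assms by simp

lemma mgf_formula:
  fixes \<pi> :: "'a \<Rightarrow> real"
  assumes fin: "finite L" and tot: "(\<Sum>x\<in>L. \<pi> x) = 1"
  shows "(\<Sum>P\<in>PiE {..<n} (\<lambda>_. L). (\<Prod>i<n. \<pi> (P i)) * exp (t * real (card {i\<in>{..<n}. Q (P i)})))
       = (1 + (\<Sum>x\<in>{x\<in>L. Q x}. \<pi> x) * (exp t - 1)) ^ n"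
proof -
  define f where "f x = \<pi> x * exp (t * (if Q x then 1 else 0))" for x
  have card_eq: "real (card {i\<in>{..<n}. Q (P i)}) = (\<Sum>i<n. (if Q (P i) then 1 else 0))" for P :: "nat \<Rightarrow> 'a"
    by (simp add: sum.If_cases Int_def)
  have "(\<Prod>i<n. \<pi> (P i)) * exp (t * real (card {i\<in>{..<n}. Q (P i)})) = (\<Prod>i<n. f (P i))" for P
  proof -
    have "exp (t * real (card {i\<in>{..<n}. Q (P i)})) = (\<Prod>i<n. exp (t * (if Q (P i) then 1 else 0)))"
      unfolding card_eq sum_distrib_left by (simp add: exp_sum)
    thus ?thesis by (simp add: f_def prod.distrib)
  qed
  hence "(\<Sum>P\<in>PiE {..<n} (\<lambda>_. L). (\<Prod>i<n. \<pi> (P i)) * exp (t * real (card {i\<in>{..<n}. Q (P i)})))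
       = (\<Sum>x\<in>L. f x) ^ n" using sum_PiE_prod_pow[OF fin, where f=f and n=n] by simp
  also have "(\<Sum>x\<in>L. f x) = (\<Sum>x\<in>{x\<in>L. Q x}. \<pi> x) * exp t + (\<Sum>x\<in>{x\<in>L. \<not> Q x}. \<pi> x)"
  proof -
    have "(\<Sum>x\<in>L. f x) = (\<Sum>x\<in>L. if Q x then \<pi> x * exp t else \<pi> x)"
      by (rule sum.cong) (auto simp: f_def)
    also have "\<dots> = (\<Sum>x\<in>L \<inter> {x. Q x}. \<pi> x * exp t) + (\<Sum>x\<in>L \<inter> - {x. Q x}. \<pi> x)"
      using fin by (rule sum.If_cases)
    also have "L \<inter> {x. Q x} = {x\<in>L. Q x}" by auto
    also have "L \<inter> - {x. Q x} = {x\<in>L. \<not> Q x}" by auto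
    finally show ?thesis by (simp add: sum_distrib_right)
  qed
  also have "(\<Sum>x\<in>{x\<in>L. \<not> Q x}. \<pi> x) = 1 - (\<Sum>x\<in>{x\<in>L. Q x}. \<pi> x)"
  proof -
    have "(\<Sum>x\<in>L. \<pi> x) = (\<Sum>x\<in>{x\<in>L. Q x}. \<pi> x) + (\<Sum>x\<in>{x\<in>L. \<not> Q x}. \<pi> x)"
    proof -
      have "(\<Sum>x\<in>L. \<pi> x) = (\<Sum>x\<in>L \<inter> {x. Q x}. \<pi> x) + (\<Sum>x\<in>L \<inter> - {x. Q x}. \<pi> x)"
        using sum.If_cases[OF fin, of "\<lambda>x. Q x" \<pi> \<pi>] by simp
      also have "L \<inter> {x. Q x} = {x\<in>L. Q x}" by auto
      also have "L \<inter> - {x. Q x} = {x\<in>L. \<not> Q x}" by auto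
      finally show ?thesis .
    qed
    thus ?thesis using tot by simp
  qed
  finally show ?thesis by (simp add: algebra_simps)
qed

lemma markov_sum:
  fixes wt f :: "'b \<Rightarrow> real"
  assumes "finite \<Omega>" "\<And>P. P \<in> \<Omega> \<Longrightarrow> wt P \<ge> 0" "\<And>P. P \<in> \<Omega> \<Longrightarrow> f P \<ge> 0"
    "\<And>P. P \<in> \<Omega> \<Longrightarrow> E P \<Longrightarrow> f P \<ge> 1"
  shows "(\<Sum>P\<in>{P\<in>\<Omega>. E P}. wt P) \<le> (\<Sum>P\<in>\<Omega>. wt P * f P)"
proof -
  have "(\<Sum>P\<in>{P\<in>\<Omega>. E P}. wt P) \<le> (\<Sum>P\<in>{P\<in>\<Omega>. E P}. wt P * f P)"
    proof (rule sum_mono)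
    fix P assume "P \<in> {P\<in>\<Omega>. E P}"
    then have "wt P * 1 \<le> wt P * f P" using assms by (intro mult_left_mono) auto
    then show "wt P \<le> wt P * f P" by simp
  qed
  also have "\<dots> \<le> (\<Sum>P\<in>\<Omega>. wt P * f P)"
    by (rule sum_mono2) (use assms in auto)
  finally show ?thesis .
qed

lemma union_bound_sum:
  fixes wt :: "'b \<Rightarrow> real"
  assumes "finite S" "finite \<Omega>" "\<And>P. P \<in> \<Omega> \<Longrightarrow> wt P \<ge> 0"
  shows "(\<Sum>P\<in>{P\<in>\<Omega>. \<exists>s\<in>S. E s P}. wt P) \<le> (\<Sum>s\<in>S. \<Sum>P\<in>{P\<in>\<Omega>. E s P}. wt P)"
  using assms(1)
proof (induction S rule: finite_induct)
  case empty then show ?case by simp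
next
  case (insert x S)
  have eq: "{P\<in>\<Omega>. \<exists>s\<in>insert x S. E s P} = {P\<in>\<Omega>. E x P} \<union> {P\<in>\<Omega>. \<exists>s\<in>S. E s P}" by auto
  have "(\<Sum>P\<in>{P\<in>\<Omega>. E x P} \<union> {P\<in>\<Omega>. \<exists>s\<in>S. E s P}. wt P)
     \<le> (\<Sum>P\<in>{P\<in>\<Omega>. E x P}. wt P) + (\<Sum>P\<in>{P\<in>\<Omega>. \<exists>s\<in>S. E s P}. wt P)"
    using assms by (subst sum_Un) (auto intro!: sum_nonneg)
  then show ?case using insert eq by simp
qed


lemma mgf_bound:
  fixes \<pi> :: "'a \<Rightarrow> real"
  assumes fin: "finite L" and nn: "\<And>x. x \<in> L \<Longrightarrow> \<pi> x \<ge> 0" and tot: "(\<Sum>x\<in>L. \<pi> x) = 1"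
  shows "(\<Sum>P\<in>PiE {..<n} (\<lambda>_. L). (\<Prod>i<n. \<pi> (P i)) * exp (t * real (card {i\<in>{..<n}. Q (P i)})))
       \<le> exp (real n * (\<Sum>x\<in>{x\<in>L. Q x}. \<pi> x) * (exp t - 1))"
proof -
  define p where "p = (\<Sum>x\<in>{x\<in>L. Q x}. \<pi> x)"
  have p0: "p \<ge> 0" unfolding p_def by (rule sum_nonneg) (use nn in auto)
  have p1: "p \<le> 1" unfolding p_def tot[symmetric] by (rule sum_mono2) (use fin nn in auto)
  have "0 \<le> 1 - p" using p1 by simp
  also have "1 - p \<le> 1 + p * (exp t - 1)" using p0 by (simp add: algebra_simps)
  finally have b0: "0 \<le> 1 + p * (exp t - 1)" .
  have "(1 + p * (exp t - 1)) ^ n \<le> exp (p * (exp t - 1)) ^ n"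
    by (rule power_mono) (use b0 in auto)
  also have "\<dots> = exp (real n * p * (exp t - 1))"
    by (simp add: exp_of_nat_mult[symmetric] mult.assoc)
  finally show ?thesis using mgf_formula[OF fin tot, where t=t and Q=Q and n=n] unfolding p_def by simp
qed

lemma wt_nonneg:
  fixes \<pi> :: "'a \<Rightarrow> real"
  assumes "\<And>x. x \<in> L \<Longrightarrow> \<pi> x \<ge> 0" "P \<in> PiE {..<n} (\<lambda>_. L)"
  shows "(\<Prod>i<n. \<pi> (P i)) \<ge> 0"
  using assms by (intro prod_nonneg) (auto simp: PiE_def Pi_def)

lemma tail_upper:
  fixes \<pi> :: "'a \<Rightarrow> real"
  assumes fin: "finite L" and nn: "\<And>x. x \<in> L \<Longrightarrow> \<pi> x \<ge> 0" and tot: "(\<Sum>x\<in>L. \<pi> x) = 1"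
  shows "(\<Sum>P\<in>{P\<in>PiE {..<n} (\<lambda>_. L). b < real (card {i\<in>{..<n}. Q (P i)})}. \<Prod>i<n. \<pi> (P i))
       \<le> exp (2 * real n * (\<Sum>x\<in>{x\<in>L. Q x}. \<pi> x) - b)"
proof -
  define p where "p = (\<Sum>x\<in>{x\<in>L. Q x}. \<pi> x)"
  have p0: "p \<ge> 0" unfolding p_def by (rule sum_nonneg) (use nn in auto)
  let ?\<Omega> = "PiE {..<n} (\<lambda>_. L)"
  have "(\<Sum>P\<in>{P\<in>?\<Omega>. b < real (card {i\<in>{..<n}. Q (P i)})}. \<Prod>i<n. \<pi> (P i))
      \<le> (\<Sum>P\<in>?\<Omega>. (\<Prod>i<n. \<pi> (P i)) * exp (real (card {i\<in>{..<n}. Q (P i)}) - b))"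
    by (rule markov_sum) (use fin wt_nonneg[OF nn] in \<open>auto simp: finite_PiE\<close>)
  also have "\<dots> = exp (- b) * (\<Sum>P\<in>?\<Omega>. (\<Prod>i<n. \<pi> (P i)) * exp (1 * real (card {i\<in>{..<n}. Q (P i)})))"
    by (simp add: sum_distrib_left exp_diff exp_minus field_simps)
  also have "\<dots> \<le> exp (- b) * exp (real n * p * (exp 1 - 1))"
    using mgf_bound[OF fin nn tot, of n 1 Q] unfolding p_def by (intro mult_left_mono) auto
  also have "\<dots> \<le> exp (- b) * exp (2 * real n * p)"
  proof -
    have "real n * p * (exp 1 - 1) \<le> real n * p * 2"
      using exp_le p0 by (intro mult_left_mono) auto
    thus ?thesis by (intro mult_left_mono) (auto simp: mult_ac)
  qed
  also have "\<dots> = exp (2 * real n * p - b)" by (simp add: exp_add[symmetric])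
  finally show ?thesis unfolding p_def .
qed

lemma tail_lower:
  fixes \<pi> :: "'a \<Rightarrow> real"
  assumes fin: "finite L" and nn: "\<And>x. x \<in> L \<Longrightarrow> \<pi> x \<ge> 0" and tot: "(\<Sum>x\<in>L. \<pi> x) = 1"
  shows "(\<Sum>P\<in>{P\<in>PiE {..<n} (\<lambda>_. L). real (card {i\<in>{..<n}. Q (P i)}) < a}. \<Prod>i<n. \<pi> (P i))
       \<le> exp (a - real n * (\<Sum>x\<in>{x\<in>L. Q x}. \<pi> x) / 2)"
proof -
  define p where "p = (\<Sum>x\<in>{x\<in>L. Q x}. \<pi> x)"
  have p0: "p \<ge> 0" unfolding p_def by (rule sum_nonneg) (use nn in auto)
  let ?\<Omega> = "PiE {..<n} (\<lambda>_. L)"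
  have "(\<Sum>P\<in>{P\<in>?\<Omega>. real (card {i\<in>{..<n}. Q (P i)}) < a}. \<Prod>i<n. \<pi> (P i))
      \<le> (\<Sum>P\<in>?\<Omega>. (\<Prod>i<n. \<pi> (P i)) * exp (a - real (card {i\<in>{..<n}. Q (P i)})))"
    by (rule markov_sum) (use fin wt_nonneg[OF nn] in \<open>auto simp: finite_PiE\<close>)
  also have "\<dots> = exp a * (\<Sum>P\<in>?\<Omega>. (\<Prod>i<n. \<pi> (P i)) * exp ((-1) * real (card {i\<in>{..<n}. Q (P i)})))"
    by (simp add: sum_distrib_left exp_diff field_simps exp_minus)
  also have "\<dots> \<le> exp a * exp (real n * p * (exp (-1) - 1))"
    using mgf_bound[OF fin nn tot, of n "-1" Q] unfolding p_def by (intro mult_left_mono) auto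
  also have "\<dots> \<le> exp a * exp (- (real n * p / 2))"
  proof -
    have e2: "exp (-1::real) \<le> 1/2"
    proof -
      have "2 \<le> exp (1::real)" using exp_ge_add_one_self[of 1] by simp
      thus ?thesis by (simp add: exp_minus field_simps)
    qed
    have "real n * p * (exp (-1) - 1) \<le> real n * p * (-1/2)"
      using e2 p0 by (intro mult_left_mono) auto
    thus ?thesis by (intro mult_left_mono) auto
  qed
  also have "\<dots> = exp (a - real n * p / 2)" by (simp add: exp_add[symmetric])
  finally show ?thesis unfolding p_def .
qed




definition fold1 :: "int \<Rightarrow> int \<Rightarrow> int" where
  "fold1 K u = K - \<bar>K - \<bar>u\<bar>\<bar>"

lemma fold1_range: "-K \<le> u \<Longrightarrow> u \<le> 2*K \<Longrightarrow> 0 \<le> fold1 K u \<and> fold1 K u \<le> K"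
  unfolding fold1_def by linarith

lemma fold1_id: "0 \<le> u \<Longrightarrow> u \<le> K \<Longrightarrow> fold1 K u = u"
  unfolding fold1_def by linarith

lemma fold1_lip: "\<bar>fold1 K u - fold1 K v\<bar> \<le> \<bar>u - v\<bar>"
  unfolding fold1_def by linarith

lemma card_le_fibers:
  assumes "finite A" "finite B" "f ` A \<subseteq> B" "\<And>b. b \<in> B \<Longrightarrow> card {a\<in>A. f a = b} \<le> k"
  shows "card A \<le> k * card B"
proof -
  have "(\<Sum>b\<in>B. \<Sum>a\<in>{a\<in>A. f a = b}. (1::nat)) = (\<Sum>a\<in>A. 1)"
    by (rule sum.group[OF assms(1,2,3)])
  then have "card A = (\<Sum>b\<in>B. card {a\<in>A. f a = b})" by simp
  also have "\<dots> \<le> (\<Sum>b\<in>B. k)" by (rule sum_mono) (use assms(4) in auto)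
  finally show ?thesis by (simp add: mult.commute)
qed

definition gmap :: "nat \<Rightarrow> nat \<Rightarrow> nat \<Rightarrow> nat \<Rightarrow> nat" where
  "gmap K i i' k = nat (fold1 (int K) (int i' - int i + int k))"

lemma gmap_range: "i \<le> K \<Longrightarrow> i' \<le> K \<Longrightarrow> k \<le> K \<Longrightarrow> gmap K i i' k \<le> K"
  unfolding gmap_def using fold1_range[of "int K" "int i' - int i + int k"] by auto

lemma gmap_lip: "i \<le> K \<Longrightarrow> i' \<le> K \<Longrightarrow> k \<le> K \<Longrightarrow>
   \<bar>real (gmap K i i' k) - real i'\<bar> \<le> \<bar>real k - real i\<bar>"
proof -
  assume a: "i \<le> K" "i' \<le> K" "k \<le> K"
  have r: "0 \<le> fold1 (int K) (int i' - int i + int k)"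
    using fold1_range[of "int K" "int i' - int i + int k"] a by auto
  have "fold1 (int K) (int i') = int i'" using a by (intro fold1_id) auto
  then have "\<bar>fold1 (int K) (int i' - int i + int k) - int i'\<bar> \<le> \<bar>int k - int i\<bar>"
    using fold1_lip[of "int K" "int i' - int i + int k" "int i'"] by simp
  then have "\<bar>int (gmap K i i' k) - int i'\<bar> \<le> \<bar>int k - int i\<bar>"
    unfolding gmap_def using r by simp
  then have "\<bar>real_of_int (int (gmap K i i' k) - int i')\<bar> \<le> \<bar>real_of_int (int k - int i)\<bar>"
    by (simp only: of_int_abs[symmetric] of_int_le_iff)
  then show ?thesis by simp
qed

lemma gmap_fiber:
  assumes "1 \<le> K" "i \<le> K" "i' \<le> K"
  shows "card {k\<in>{0..K}. gmap K i i' k = z} \<le> 2"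
proof -
  let ?c = "int i' - int i"
  define A1 where "A1 = {k\<in>{0..K}. ?c + int k = int z \<or> ?c + int k = int z - 2 * int K}"
  define A2 where "A2 = {k\<in>{0..K}. ?c + int k = - int z \<or> ?c + int k = 2 * int K - int z}"
  have sub: "{k\<in>{0..K}. gmap K i i' k = z} \<subseteq> A1 \<union> A2"
  proof
    fix k assume "k \<in> {k\<in>{0..K}. gmap K i i' k = z}"
    then have k: "k \<le> K" "nat (fold1 (int K) (?c + int k)) = z" unfolding gmap_def by auto
    have "0 \<le> fold1 (int K) (?c + int k)"
      using fold1_range[of "int K" "?c + int k"] k assms by auto
    then have "fold1 (int K) (?c + int k) = int z" using k by auto
    then have "\<bar>?c + int k\<bar> = int z \<or> \<bar>?c + int k\<bar> = 2 * int K - int z"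
      unfolding fold1_def by linarith
    then have "(?c + int k = int z \<or> ?c + int k = int z - 2 * int K) \<or>
               (?c + int k = - int z \<or> ?c + int k = 2 * int K - int z)" by linarith
    then show "k \<in> A1 \<union> A2" using k unfolding A1_def A2_def by auto
  qed
  have c1: "card A1 \<le> 1"
  proof -
    have "\<forall>x\<in>A1. \<forall>y\<in>A1. x = y"
    proof (intro ballI)
      fix x y assume "x \<in> A1" "y \<in> A1"
      then have "x \<le> K" "y \<le> K" "?c + int x = int z \<or> ?c + int x = int z - 2 * int K"
        "?c + int y = int z \<or> ?c + int y = int z - 2 * int K" unfolding A1_def by auto
      then show "x = y" using assms(1) by linarith
    qed
    then show ?thesis using card_le_Suc0_iff_eq[of A1] unfolding A1_def by auto
  qed
  have c2: "card A2 \<le> 1"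
  proof -
    have "\<forall>x\<in>A2. \<forall>y\<in>A2. x = y"
    proof (intro ballI)
      fix x y assume "x \<in> A2" "y \<in> A2"
      then have "x \<le> K" "y \<le> K" "?c + int x = - int z \<or> ?c + int x = 2 * int K - int z"
        "?c + int y = - int z \<or> ?c + int y = 2 * int K - int z" unfolding A2_def by auto
      then show "x = y" using assms(1) by linarith
    qed
    then show ?thesis using card_le_Suc0_iff_eq[of A2] unfolding A2_def by auto
  qed
  have "card {k\<in>{0..K}. gmap K i i' k = z} \<le> card (A1 \<union> A2)"
    by (rule card_mono) (use sub A1_def A2_def in auto)
  also have "\<dots> \<le> card A1 + card A2" by (rule card_Un_le)
  finally show ?thesis using c1 c2 by simp
qed




definition emb :: "real \<Rightarrow> nat \<times> nat \<Rightarrow> real \<times> real" where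
  "emb \<epsilon> p = (real (fst p) * \<epsilon>, real (snd p) * \<epsilon>)"

definition Kof :: "nat \<Rightarrow> real \<Rightarrow> nat" where
  "Kof n \<epsilon> = nat \<lfloor>sqrt (real n) / \<epsilon>\<rfloor>"

lemma le_nat_floor_iff: "0 \<le> x \<Longrightarrow> (real i \<le> x) = (i \<le> nat \<lfloor>x\<rfloor>)"
proof
  assume "real i \<le> x" then show "i \<le> nat \<lfloor>x\<rfloor>" by (rule le_nat_floor)
next
  assume a: "0 \<le> x" "i \<le> nat \<lfloor>x\<rfloor>"
  then have "int i \<le> \<lfloor>x\<rfloor>" by linarith
  then show "real i \<le> x" by (simp add: le_floor_iff)
qed

lemma lattice_eq:
  assumes "\<epsilon> > 0"
  shows "lattice n \<epsilon> = emb \<epsilon> ` ({0..Kof n \<epsilon>} \<times> {0..Kof n \<epsilon>})"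
proof -
  have x0: "0 \<le> sqrt (real n) / \<epsilon>" using assms by simp
  show ?thesis
  proof (rule set_eqI)
    fix z
    show "z \<in> lattice n \<epsilon> \<longleftrightarrow> z \<in> emb \<epsilon> ` ({0..Kof n \<epsilon>} \<times> {0..Kof n \<epsilon>})"
    proof
      assume "z \<in> lattice n \<epsilon>"
      then obtain i j where "z = (real i * \<epsilon>, real j * \<epsilon>)" "real i \<le> sqrt (real n) / \<epsilon>"
        "real j \<le> sqrt (real n) / \<epsilon>" unfolding lattice_def by blast
      then have "z = emb \<epsilon> (i,j)" "(i,j) \<in> {0..Kof n \<epsilon>} \<times> {0..Kof n \<epsilon>}"
        unfolding emb_def Kof_def using le_nat_floor_iff[OF x0] by auto
      then show "z \<in> emb \<epsilon> ` ({0..Kof n \<epsilon>} \<times> {0..Kof n \<epsilon>})" by blast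
    next
      assume "z \<in> emb \<epsilon> ` ({0..Kof n \<epsilon>} \<times> {0..Kof n \<epsilon>})"
      then obtain i j where "z = emb \<epsilon> (i,j)" "i \<le> Kof n \<epsilon>" "j \<le> Kof n \<epsilon>" by auto
      then have "z = (real i * \<epsilon>, real j * \<epsilon>)" "real i \<le> sqrt (real n) / \<epsilon>"
        "real j \<le> sqrt (real n) / \<epsilon>" unfolding emb_def Kof_def using le_nat_floor_iff[OF x0] by auto
      then show "z \<in> lattice n \<epsilon>" unfolding lattice_def by blast
    qed
  qed
qed

lemma inj_emb: "\<epsilon> > 0 \<Longrightarrow> inj_on (emb \<epsilon>) A"
  by (auto simp: inj_on_def emb_def prod_eq_iff)

lemma finite_lattice: "\<epsilon> > 0 \<Longrightarrow> finite (lattice n \<epsilon>)"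
  by (simp add: lattice_eq)

lemma card_lattice: "\<epsilon> > 0 \<Longrightarrow> card (lattice n \<epsilon>) = (Kof n \<epsilon> + 1)^2"
  by (simp add: lattice_eq card_image inj_emb card_cartesian_product power2_eq_square)

lemma edist_mono:
  assumes "\<bar>a' - c'\<bar> \<le> \<bar>a - c\<bar>" "\<bar>b' - d'\<bar> \<le> \<bar>b - d\<bar>"
  shows "edist (a' * e, b' * e) (c' * e, d' * e) \<le> edist (a * e, b * e) (c * e, d * e)"
proof -
  have 1: "(a' - c')^2 \<le> (a - c)^2" using assms(1)
    by (metis abs_ge_zero power2_abs power_mono)
  have 2: "(b' - d')^2 \<le> (b - d)^2" using assms(2)
    by (metis abs_ge_zero power2_abs power_mono)
  have "(a' * e - c' * e)^2 + (b' * e - d' * e)^2 = e^2 * ((a' - c')^2 + (b' - d')^2)"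
    by (simp add: power2_eq_square algebra_simps)
  also have "\<dots> \<le> e^2 * ((a - c)^2 + (b - d)^2)"
    using 1 2 by (intro mult_left_mono) auto
  also have "\<dots> = (a * e - c * e)^2 + (b * e - d * e)^2"
    by (simp add: power2_eq_square algebra_simps)
  finally show ?thesis unfolding edist_def by simp
qed

lemma Gamma_eq:
  assumes "\<epsilon> > 0"
  shows "Gamma n r \<epsilon> (emb \<epsilon> p) =
     emb \<epsilon> ` {q \<in> {0..Kof n \<epsilon>} \<times> {0..Kof n \<epsilon>}. edist (emb \<epsilon> p) (emb \<epsilon> q) \<le> r}"
  unfolding Gamma_def lattice_eq[OF assms] by auto

lemma card_Gamma:
  assumes "\<epsilon> > 0"
  shows "card (Gamma n r \<epsilon> (emb \<epsilon> p)) =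
     card {q \<in> {0..Kof n \<epsilon>} \<times> {0..Kof n \<epsilon>}. edist (emb \<epsilon> p) (emb \<epsilon> q) \<le> r}"
  unfolding Gamma_eq[OF assms] by (rule card_image) (rule inj_emb[OF assms])

lemma gamma_ratio:
  assumes e: "\<epsilon> > 0" and K1: "1 \<le> Kof n \<epsilon>"
    and x: "x \<in> lattice n \<epsilon>" and y: "y \<in> lattice n \<epsilon>"
  shows "card (Gamma n r \<epsilon> x) \<le> 4 * card (Gamma n r \<epsilon> y)"
proof -
  define K where "K = Kof n \<epsilon>"
  define I where "I = {0..K} \<times> {0..K}"
  obtain i j where ij: "i \<le> K" "j \<le> K" "x = emb \<epsilon> (i, j)"
    using x unfolding lattice_eq[OF e] K_def by auto
  obtain i' j' where ij': "i' \<le> K" "j' \<le> K" "y = emb \<epsilon> (i', j')"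
    using y unfolding lattice_eq[OF e] K_def by auto
  define S where "S p = {q \<in> I. edist (emb \<epsilon> p) (emb \<epsilon> q) \<le> r}" for p
  define \<psi> where "\<psi> q = (gmap K i i' (fst q), gmap K j j' (snd q))" for q
  have cx: "card (Gamma n r \<epsilon> x) = card (S (i,j))"
    unfolding ij(3) card_Gamma[OF e] S_def I_def K_def ..
  have cy: "card (Gamma n r \<epsilon> y) = card (S (i',j'))"
    unfolding ij'(3) card_Gamma[OF e] S_def I_def K_def ..
  have finS: "finite (S p)" for p unfolding S_def I_def by auto
  have img: "\<psi> ` S (i,j) \<subseteq> S (i',j')"
  proof
    fix z assume "z \<in> \<psi> ` S (i,j)"
    then obtain k l where kl: "(k,l) \<in> S (i,j)" "z = \<psi> (k,l)" by auto
    then have kK: "k \<le> K" "l \<le> K" and d: "edist (emb \<epsilon> (i,j)) (emb \<epsilon> (k,l)) \<le> r"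
      unfolding S_def I_def by auto
    have g1: "\<bar>real i' - real (gmap K i i' k)\<bar> \<le> \<bar>real i - real k\<bar>"
      using gmap_lip[OF ij(1) ij'(1) kK(1)] by linarith
    have g2: "\<bar>real j' - real (gmap K j j' l)\<bar> \<le> \<bar>real j - real l\<bar>"
      using gmap_lip[OF ij(2) ij'(2) kK(2)] by linarith
    have "edist (emb \<epsilon> (i',j')) (emb \<epsilon> z) \<le> edist (emb \<epsilon> (i,j)) (emb \<epsilon> (k,l))"
      unfolding kl(2) \<psi>_def emb_def using edist_mono[OF g1 g2] by simp
    moreover have "z \<in> I" unfolding kl(2) \<psi>_def I_def
      using gmap_range[OF ij(1) ij'(1) kK(1)] gmap_range[OF ij(2) ij'(2) kK(2)] by simp
    ultimately show "z \<in> S (i',j')" using d unfolding S_def by auto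
  qed
  have fib: "card {q\<in>S (i,j). \<psi> q = b} \<le> 4" if "b \<in> S (i',j')" for b
  proof -
    obtain u v where b: "b = (u,v)" by fastforce
    have sub: "{q\<in>S (i,j). \<psi> q = b} \<subseteq> {k\<in>{0..K}. gmap K i i' k = u} \<times> {l\<in>{0..K}. gmap K j j' l = v}"
    proof (rule subsetI)
      fix q assume q: "q \<in> {q\<in>S (i,j). \<psi> q = b}"
      obtain k l where ql: "q = (k,l)" by fastforce
      have "q \<in> S (i,j)" "\<psi> q = b" using q by simp_all
      then have "q \<in> I" "\<psi> q = (u,v)" unfolding S_def b by simp_all
      then have "k \<in> {0..K}" "l \<in> {0..K}" "gmap K i i' k = u" "gmap K j j' l = v"
        unfolding I_def \<psi>_def ql by simp_all
      then show "q \<in> {k\<in>{0..K}. gmap K i i' k = u} \<times> {l\<in>{0..K}. gmap K j j' l = v}"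
        unfolding ql by simp
    qed
    have fp: "finite ({k\<in>{0..K}. gmap K i i' k = u} \<times> {l\<in>{0..K}. gmap K j j' l = v})" by simp
    have "card {q\<in>S (i,j). \<psi> q = b} \<le> card ({k\<in>{0..K}. gmap K i i' k = u} \<times> {l\<in>{0..K}. gmap K j j' l = v})"
      by (rule card_mono[OF fp sub])
    also have "\<dots> = card {k\<in>{0..K}. gmap K i i' k = u} * card {l\<in>{0..K}. gmap K j j' l = v}"
      by (rule card_cartesian_product)
    also have "\<dots> \<le> 2 * 2"
    proof -
      have K1': "1 \<le> K" using K1 unfolding K_def .
      have a1: "card {k\<in>{0..K}. gmap K i i' k = u} \<le> 2" by (rule gmap_fiber[OF K1' ij(1) ij'(1)])
      have a2: "card {l\<in>{0..K}. gmap K j j' l = v} \<le> 2" by (rule gmap_fiber[OF K1' ij(2) ij'(2)])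
      show ?thesis using mult_le_mono[OF a1 a2] .
    qed
    finally show ?thesis by simp
  qed
  show ?thesis unfolding cx cy
    by (rule card_le_fibers[OF finS finS img fib])
qed

lemma count_closed:
  assumes "u \<ge> 0" "h \<ge> 0"
  shows "real (card {k::nat. u \<le> real k \<and> real k \<le> u + h}) \<le> h + 1"
proof -
  have sub: "{k::nat. u \<le> real k \<and> real k \<le> u + h} \<subseteq> {nat \<lceil>u\<rceil> .. nat \<lfloor>u + h\<rfloor>}"
  proof
    fix k assume k: "k \<in> {k::nat. u \<le> real k \<and> real k \<le> u + h}"
    then have "\<lceil>u\<rceil> \<le> int k" by (simp add: ceiling_le_iff)
    moreover have "int k \<le> \<lfloor>u + h\<rfloor>" using k by (simp add: le_floor_iff)
    ultimately show "k \<in> {nat \<lceil>u\<rceil> .. nat \<lfloor>u + h\<rfloor>}" by (simp add: nat_le_iff le_nat_iff)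
  qed
  have "card {k::nat. u \<le> real k \<and> real k \<le> u + h} \<le> card {nat \<lceil>u\<rceil> .. nat \<lfloor>u + h\<rfloor>}"
    by (rule card_mono[OF _ sub]) auto
  also have "\<dots> = Suc (nat \<lfloor>u + h\<rfloor>) - nat \<lceil>u\<rceil>" by simp
  finally have c: "card {k::nat. u \<le> real k \<and> real k \<le> u + h} \<le> Suc (nat \<lfloor>u + h\<rfloor>) - nat \<lceil>u\<rceil>" .
  have f1: "real_of_int \<lfloor>u + h\<rfloor> \<le> u + h" by simp
  have f2: "u \<le> real_of_int \<lceil>u\<rceil>" by simp
  have "real (Suc (nat \<lfloor>u + h\<rfloor>) - nat \<lceil>u\<rceil>) \<le> h + 1"
  proof (cases "nat \<lceil>u\<rceil> \<le> Suc (nat \<lfloor>u + h\<rfloor>)")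
    case True
    then have "real (Suc (nat \<lfloor>u + h\<rfloor>) - nat \<lceil>u\<rceil>) = real (nat \<lfloor>u + h\<rfloor>) + 1 - real (nat \<lceil>u\<rceil>)"
      by (simp add: of_nat_diff)
    also have "\<dots> = real_of_int \<lfloor>u + h\<rfloor> + 1 - real_of_int \<lceil>u\<rceil>" using assms by simp
    finally show ?thesis using f1 f2 by linarith
  next
    case False
    then have "Suc (nat \<lfloor>u + h\<rfloor>) - nat \<lceil>u\<rceil> = 0" by (simp only: diff_is_0_eq)
    then show ?thesis using assms by simp
  qed
  then show ?thesis using c by (meson of_nat_le_iff order_trans)
qed

lemma count_open:
  assumes "u \<ge> 0" "h \<ge> 0"
  shows "real (card {k::nat. u < real k \<and> real k < u + h}) \<ge> h - 1"
proof -
  have sub: "{Suc (nat \<lfloor>u\<rfloor>) ..< nat \<lceil>u + h\<rceil>} \<subseteq> {k::nat. u < real k \<and> real k < u + h}"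
  proof
    fix k assume k: "k \<in> {Suc (nat \<lfloor>u\<rfloor>) ..< nat \<lceil>u + h\<rceil>}"
    then have "\<lfloor>u\<rfloor> < int k" "int k < \<lceil>u + h\<rceil>" using assms by auto
    then show "k \<in> {k::nat. u < real k \<and> real k < u + h}"
      by (simp add: floor_less_iff less_ceiling_iff)
  qed
  have fin: "finite {k::nat. u < real k \<and> real k < u + h}"
  proof (rule finite_subset)
    show "{k::nat. u < real k \<and> real k < u + h} \<subseteq> {..nat \<lfloor>u + h\<rfloor>}"
      using le_nat_floor by fastforce
  qed auto
  have c: "card {Suc (nat \<lfloor>u\<rfloor>) ..< nat \<lceil>u + h\<rceil>} \<le> card {k::nat. u < real k \<and> real k < u + h}"
    by (rule card_mono[OF fin sub])
  have f1: "u + h \<le> real_of_int \<lceil>u + h\<rceil>" by simp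
  have f2: "real_of_int \<lfloor>u\<rfloor> \<le> u" by simp
  have "h - 1 \<le> real (nat \<lceil>u + h\<rceil> - Suc (nat \<lfloor>u\<rfloor>))"
  proof (cases "Suc (nat \<lfloor>u\<rfloor>) \<le> nat \<lceil>u + h\<rceil>")
    case True
    then have "real (nat \<lceil>u + h\<rceil> - Suc (nat \<lfloor>u\<rfloor>)) = real (nat \<lceil>u + h\<rceil>) - real (nat \<lfloor>u\<rfloor>) - 1"
      by (simp add: of_nat_diff)
    also have "\<dots> = real_of_int \<lceil>u + h\<rceil> - real_of_int \<lfloor>u\<rfloor> - 1" using assms by simp
    finally show ?thesis using f1 f2 by linarith
  next
    case False
    then have "real_of_int \<lceil>u + h\<rceil> \<le> real_of_int \<lfloor>u\<rfloor> + 1" using assms by linarith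
    then have "h - 1 \<le> 0" using f1 f2 by linarith
    moreover have "nat \<lceil>u + h\<rceil> - Suc (nat \<lfloor>u\<rfloor>) = 0" using False by (simp only: diff_is_0_eq)
    ultimately show ?thesis by simp
  qed
  moreover have "real (card {Suc (nat \<lfloor>u\<rfloor>) ..< nat \<lceil>u + h\<rceil>}) \<le> real (card {k::nat. u < real k \<and> real k < u + h})"
    using c by (simp only: of_nat_le_iff)
  ultimately show ?thesis by simp
qed




lemma cell_setI_iff:
  "x \<in> cell_set n m (a, b) \<longleftrightarrow>
    real a * (sqrt (real n) / real m) \<le> fst x \<and> fst x \<le> (real a + 1) * (sqrt (real n) / real m) \<and>
    real b * (sqrt (real n) / real m) \<le> snd x \<and> snd x \<le> (real b + 1) * (sqrt (real n) / real m)"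
  unfolding cell_set_def Let_def by (cases x) (simp add: ac_simps)

lemma cell_card_bounds:
  assumes e: "0 < \<epsilon>" and m1: "1 \<le> m"
    and valid: "valid_assignment n \<epsilon> m cell" and ab: "a < m" "b < m"
  defines "s \<equiv> sqrt (real n) / real m"
  shows "(s / \<epsilon> - 1)^2 \<le> real (card {x\<in>lattice n \<epsilon>. cell x = (a,b)}) \<or> s / \<epsilon> < 1"
    and "real (card {x\<in>lattice n \<epsilon>. cell x = (a,b)}) \<le> (s / \<epsilon> + 1)^2"
proof -
  have s0: "s > 0 \<or> n = 0" unfolding s_def using m1 by auto
  have s00: "s \<ge> 0" unfolding s_def by simp
  define C where "C = {x\<in>lattice n \<epsilon>. cell x = (a,b)}"
  have finC: "finite C" unfolding C_def using finite_lattice[OF e] by simp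
  define J where "J c = {k::nat. real c * s / \<epsilon> < real k \<and> real k < real c * s / \<epsilon> + s / \<epsilon>}" for c :: nat
  define J' where "J' c = {k::nat. real c * s / \<epsilon> \<le> real k \<and> real k \<le> real c * s / \<epsilon> + s / \<epsilon>}" for c :: nat
  have u0: "0 \<le> real c * s / \<epsilon>" for c :: nat using s00 e by simp
  have h0: "0 \<le> s / \<epsilon>" using s00 e by simp
  have ms: "real m * s = sqrt (real n)" unfolding s_def using m1 by simp
  have up: "C \<subseteq> emb \<epsilon> ` (J' a \<times> J' b)"
  proof
    fix x assume x: "x \<in> C"
    then have xL: "x \<in> lattice n \<epsilon>" and cx: "cell x = (a,b)" unfolding C_def by auto
    obtain k l where kl: "x = emb \<epsilon> (k,l)" using xL unfolding lattice_eq[OF e] by auto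
    have "x \<in> cell_set n m (a,b)" using valid xL cx unfolding valid_assignment_def by metis
    then have "real a * s \<le> real k * \<epsilon>" "real k * \<epsilon> \<le> (real a + 1) * s"
      "real b * s \<le> real l * \<epsilon>" "real l * \<epsilon> \<le> (real b + 1) * s"
      unfolding cell_setI_iff kl emb_def s_def by auto
    then have "k \<in> J' a" "l \<in> J' b" unfolding J'_def using e
      by (auto simp: field_simps)
    then show "x \<in> emb \<epsilon> ` (J' a \<times> J' b)" using kl by auto
  qed
  have "card C \<le> card (J' a \<times> J' b)"
  proof -
    have fJ: "finite (J' c)" for c
    proof (rule finite_subset)
      show "J' c \<subseteq> {..nat \<lfloor>real c * s / \<epsilon> + s / \<epsilon>\<rfloor>}" unfolding J'_def using le_nat_floor by auto
    qed auto
    have "card C \<le> card (emb \<epsilon> ` (J' a \<times> J' b))" by (rule card_mono[OF _ up]) (use fJ in auto)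
    also have "\<dots> \<le> card (J' a \<times> J' b)" by (rule card_image_le) (use fJ in auto)
    finally show ?thesis .
  qed
  also have "\<dots> = card (J' a) * card (J' b)" by (rule card_cartesian_product)
  finally have "real (card C) \<le> real (card (J' a)) * real (card (J' b))"
    by (metis of_nat_le_iff of_nat_mult)
  also have "\<dots> \<le> (s / \<epsilon> + 1) * (s / \<epsilon> + 1)"
    using count_closed[OF u0 h0, of a] count_closed[OF u0 h0, of b] unfolding J'_def
    by (intro mult_mono) auto
  finally show "real (card {x\<in>lattice n \<epsilon>. cell x = (a,b)}) \<le> (s / \<epsilon> + 1)^2"
    unfolding C_def by (simp add: power2_eq_square)
  show "(s / \<epsilon> - 1)^2 \<le> real (card {x\<in>lattice n \<epsilon>. cell x = (a,b)}) \<or> s / \<epsilon> < 1"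
  proof (cases "s / \<epsilon> < 1")
    case True then show ?thesis by simp
  next
    case False
    then have sp: "s > 0" using e by (auto simp: field_simps)
    have low: "emb \<epsilon> ` (J a \<times> J b) \<subseteq> C"
    proof
      fix x assume "x \<in> emb \<epsilon> ` (J a \<times> J b)"
      then obtain k l where kl: "x = emb \<epsilon> (k,l)" "k \<in> J a" "l \<in> J b" by auto
      have k1: "real a * s < real k * \<epsilon>" "real k * \<epsilon> < (real a + 1) * s"
        using kl(2) e unfolding J_def by (auto simp: field_simps)
      have l1: "real b * s < real l * \<epsilon>" "real l * \<epsilon> < (real b + 1) * s"
        using kl(3) e unfolding J_def by (auto simp: field_simps)
      have "a + 1 \<le> m" "b + 1 \<le> m" using ab by simp_all
      then have "real a + 1 \<le> real m" "real b + 1 \<le> real m"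
        by (metis of_nat_1 of_nat_add of_nat_le_iff)+
      then have am: "(real a + 1) * s \<le> sqrt (real n)" and bm: "(real b + 1) * s \<le> sqrt (real n)"
        using sp ms by (metis less_eq_real_def mult_right_mono)+
      have "real k \<le> sqrt (real n) / \<epsilon>" using k1 am e by (simp add: field_simps)
      moreover have "real l \<le> sqrt (real n) / \<epsilon>" using l1 bm e by (simp add: field_simps)
      ultimately have xL: "x \<in> lattice n \<epsilon>" unfolding kl(1) lattice_def emb_def fst_conv snd_conv by blast
      obtain a' b' where cx: "cell x = (a', b')" by fastforce
      have "x \<in> cell_set n m (a',b')" using valid xL cx unfolding valid_assignment_def by metis
      then have c1: "real a' * s \<le> real k * \<epsilon>" "real k * \<epsilon> \<le> (real a' + 1) * s"
        "real b' * s \<le> real l * \<epsilon>" "real l * \<epsilon> \<le> (real b' + 1) * s"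
        unfolding cell_setI_iff kl emb_def s_def by auto
      have "real a' * s < (real a + 1) * s" using c1(1) k1(2) by linarith
      then have "real a' < real a + 1" using sp by (rule mult_right_less_imp_less[OF _ less_imp_le])
      moreover have "real a * s < (real a' + 1) * s" using c1(2) k1(1) by linarith
      then have "real a < real a' + 1" using sp by (rule mult_right_less_imp_less[OF _ less_imp_le])
      ultimately have "a' = a" by linarith
      moreover have "real b' * s < (real b + 1) * s" using c1(3) l1(2) by linarith
      then have "real b' < real b + 1" using sp by (rule mult_right_less_imp_less[OF _ less_imp_le])
      moreover have "real b * s < (real b' + 1) * s" using c1(4) l1(1) by linarith
      then have "real b < real b' + 1" using sp by (rule mult_right_less_imp_less[OF _ less_imp_le])
      ultimately have "b' = b" by linarith
      then show "x \<in> C" using xL cx \<open>a' = a\<close> unfolding C_def by auto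
    qed
    have "card (J a \<times> J b) = card (emb \<epsilon> ` (J a \<times> J b))"
      by (rule card_image[symmetric]) (rule inj_emb[OF e])
    also have "\<dots> \<le> card C" by (rule card_mono[OF finC low])
    finally have "card (J a) * card (J b) \<le> card C" by (simp add: card_cartesian_product)
    then have cc: "real (card (J a)) * real (card (J b)) \<le> real (card C)"
      by (metis of_nat_le_iff of_nat_mult)
    have "(s / \<epsilon> - 1) * (s / \<epsilon> - 1) \<le> real (card (J a)) * real (card (J b))"
      using count_open[OF u0 h0, of a] count_open[OF u0 h0, of b] False unfolding J_def
      by (intro mult_mono) auto
    then show ?thesis using cc unfolding C_def by (simp add: power2_eq_square)
  qed
qed




lemma weights_facts:
  assumes e: "0 < \<epsilon>" and K1: "1 \<le> Kof n \<epsilon>" and r: "r \<ge> 0"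
  defines "w \<equiv> \<lambda>x. real (card (Gamma n r \<epsilon> x))"
  defines "w0 \<equiv> w (emb \<epsilon> (0,0))"
  shows "w0 \<ge> 1" "\<And>x. x \<in> lattice n \<epsilon> \<Longrightarrow> w x \<le> 4 * w0"
    "\<And>x. x \<in> lattice n \<epsilon> \<Longrightarrow> w0 \<le> 4 * w x"
proof -
  have y0: "emb \<epsilon> (0,0) \<in> lattice n \<epsilon>" unfolding lattice_eq[OF e] by auto
  have "finite (Gamma n r \<epsilon> (emb \<epsilon> (0,0)))" unfolding Gamma_def using finite_lattice[OF e] by simp
  moreover have "emb \<epsilon> (0,0) \<in> Gamma n r \<epsilon> (emb \<epsilon> (0,0))" unfolding Gamma_def edist_def
    using y0 r by simp
  ultimately have "card (Gamma n r \<epsilon> (emb \<epsilon> (0,0))) \<noteq> 0" by auto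
  then show "w0 \<ge> 1" unfolding w0_def w_def by simp
  fix x assume x: "x \<in> lattice n \<epsilon>"
  have "card (Gamma n r \<epsilon> x) \<le> 4 * card (Gamma n r \<epsilon> (emb \<epsilon> (0,0)))"
    by (rule gamma_ratio[OF e K1 x y0])
  then show "w x \<le> 4 * w0" unfolding w0_def w_def by (metis of_nat_le_iff of_nat_mult of_nat_numeral)
  have "card (Gamma n r \<epsilon> (emb \<epsilon> (0,0))) \<le> 4 * card (Gamma n r \<epsilon> x)"
    by (rule gamma_ratio[OF e K1 y0 x])
  then show "w0 \<le> 4 * w x" unfolding w0_def w_def by (metis of_nat_le_iff of_nat_mult of_nat_numeral)
qed

lemma stat_sum:
  assumes e: "0 < \<epsilon>" and r: "r \<ge> 0"
  shows "(\<Sum>x\<in>lattice n \<epsilon>. stat_dist n r \<epsilon> x) = 1"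
    and "\<And>x. stat_dist n r \<epsilon> x \<ge> 0"
proof -
  have y0: "emb \<epsilon> (0,0) \<in> lattice n \<epsilon>" unfolding lattice_eq[OF e] by auto
  have "finite (Gamma n r \<epsilon> (emb \<epsilon> (0,0)))" unfolding Gamma_def using finite_lattice[OF e] by simp
  moreover have "emb \<epsilon> (0,0) \<in> Gamma n r \<epsilon> (emb \<epsilon> (0,0))" unfolding Gamma_def edist_def
    using y0 r by simp
  ultimately have "card (Gamma n r \<epsilon> (emb \<epsilon> (0,0))) \<noteq> 0" by auto
  then have "0 < real (card (Gamma n r \<epsilon> (emb \<epsilon> (0,0))))" by simp
  also have "\<dots> \<le> (\<Sum>y\<in>lattice n \<epsilon>. real (card (Gamma n r \<epsilon> y)))"
    by (rule member_le_sum[OF y0]) (use finite_lattice[OF e] in auto)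
  finally have W: "0 < (\<Sum>y\<in>lattice n \<epsilon>. real (card (Gamma n r \<epsilon> y)))" .
  show "(\<Sum>x\<in>lattice n \<epsilon>. stat_dist n r \<epsilon> x) = 1"
    unfolding stat_dist_def sum_divide_distrib[symmetric] using W by simp
  show "\<And>x. stat_dist n r \<epsilon> x \<ge> 0" unfolding stat_dist_def by (simp add: sum_nonneg)
qed

lemma cell_prob:
  assumes e: "0 < \<epsilon>" "\<epsilon> \<le> 1" and r: "r \<ge> 0" and R: "300 \<le> R" "R \<le> sqrt (real n)"
    and valid: "valid_assignment n \<epsilon> (num_cells n R) cell"
    and ab: "a < num_cells n R" "b < num_cells n R"
  shows "R^2 / 4096 \<le> real n * (\<Sum>x\<in>{x\<in>lattice n \<epsilon>. cell x = (a,b)}. stat_dist n r \<epsilon> x)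
       \<and> real n * (\<Sum>x\<in>{x\<in>lattice n \<epsilon>. cell x = (a,b)}. stat_dist n r \<epsilon> x) \<le> 16 * R^2"
proof -
  define m where "m = num_cells n R"
  define x0 where "x0 = sqrt (5 * real n) / R"
  have sn: "sqrt (real n) \<ge> 300" using R by linarith
  then have n0: "real n > 0" by (cases "n = 0") auto
  have s5: "sqrt (5 * real n) = sqrt 5 * sqrt (real n)" by (simp add: real_sqrt_mult)
  have sq5a: "2 \<le> sqrt (5::real)" by (rule real_le_rsqrt) simp
  have sq5b: "sqrt (5::real) \<le> 3" by (rule real_le_lsqrt) simp_all
  note sq5 = sq5a sq5b
  have x0p: "x0 > 0" unfolding x0_def using n0 R by simp
  have mdef: "real m = real_of_int \<lceil>x0\<rceil>" unfolding m_def num_cells_def x0_def[symmetric]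
    using x0p by simp
  have mx: "x0 \<le> real m" "real m < x0 + 1" unfolding mdef using ceiling_correct[of x0] by linarith+
  have m1: "1 \<le> m" using mx x0p by linarith
  define s where "s = sqrt (real n) / real m"
  have ms: "real m * s = sqrt (real n)" unfolding s_def using m1 by simp
  have Rx0: "R * x0 = sqrt 5 * sqrt (real n)" unfolding x0_def s5 using R by simp
  have "R * real m \<ge> 2 * sqrt (real n)"
  proof -
    have "R * real m \<ge> R * x0" using mx R by (intro mult_left_mono) auto
    moreover have "sqrt 5 * sqrt (real n) \<ge> 2 * sqrt (real n)" using sq5 by (intro mult_right_mono) auto
    ultimately show ?thesis using Rx0 by linarith
  qed
  then have s_up: "s \<le> R / 2" unfolding s_def using m1 by (simp add: field_simps)
  have "R * real m \<le> 4 * sqrt (real n)"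
  proof -
    have "R * real m \<le> R * (x0 + 1)" using mx R by (intro mult_left_mono) auto
    moreover have "sqrt 5 * sqrt (real n) \<le> 3 * sqrt (real n)" using sq5 by (intro mult_right_mono) auto
    ultimately show ?thesis using Rx0 R by (simp add: algebra_simps)
  qed
  then have s_low: "R / 4 \<le> s" unfolding s_def using m1 by (simp add: field_simps)
  define Y where "Y = sqrt (real n) / \<epsilon>"
  define K where "K = Kof n \<epsilon>"
  have "\<epsilon> * sqrt (real n) \<le> sqrt (real n)" using e sn by (intro mult_left_le_one_le) auto
  then have Yge: "Y \<ge> sqrt (real n)" unfolding Y_def using e by (simp add: field_simps)
  have KYe: "real K = real_of_int \<lfloor>Y\<rfloor>" unfolding K_def Kof_def Y_def[symmetric]
    using Yge sn by simp
  have KY: "real K \<le> Y" "Y < real K + 1" unfolding KYe using floor_correct[of Y] by linarith+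
  have K1: "1 \<le> Kof n \<epsilon>" using KY Yge sn unfolding K_def by linarith
  have cL: "real (card (lattice n \<epsilon>)) = (real K + 1)^2"
    unfolding card_lattice[OF e(1)] K_def by simp
  have cL_low: "Y^2 \<le> real (card (lattice n \<epsilon>))" unfolding cL
    using KY Yge sn by (intro power_mono) auto
  have cL_up: "real (card (lattice n \<epsilon>)) \<le> 4 * Y^2"
  proof -
    have "(real K + 1)^2 \<le> (2 * Y)^2" using KY Yge sn by (intro power_mono) auto
    then show ?thesis unfolding cL by (simp add: power_mult_distrib)
  qed
  define X where "X = s / \<epsilon>"
  have "\<epsilon> * s \<le> s" using e s_low R by (intro mult_left_le_one_le) auto
  then have Xge: "X \<ge> s" unfolding X_def using e by (simp add: field_simps)
  have X75: "X \<ge> 75" using Xge s_low R by linarith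
  define C where "C = {x\<in>lattice n \<epsilon>. cell x = (a,b)}"
  have cb: "(X - 1)^2 \<le> real (card C) \<or> X < 1" "real (card C) \<le> (X + 1)^2"
    using cell_card_bounds[OF e(1) m1 valid[folded m_def] ab[folded m_def]]
    unfolding X_def s_def C_def by blast+
  have cC_low: "X^2 / 4 \<le> real (card C)"
  proof -
    have "(X / 2)^2 \<le> (X - 1)^2" using X75 by (intro power_mono) auto
    then show ?thesis using cb(1) X75 by (simp add: power_divide)
  qed
  have cC_up: "real (card C) \<le> 4 * X^2"
  proof -
    have "(X + 1)^2 \<le> (2 * X)^2" using X75 by (intro power_mono) auto
    then show ?thesis using cb(2) by (simp add: power_mult_distrib)
  qed
  define w where "w = (\<lambda>x. real (card (Gamma n r \<epsilon> x)))"
  define w0 where "w0 = w (emb \<epsilon> (0,0))"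
  define W where "W = (\<Sum>y\<in>lattice n \<epsilon>. w y)"
  have wf: "w0 \<ge> 1" "\<And>x. x \<in> lattice n \<epsilon> \<Longrightarrow> w x \<le> 4 * w0" "\<And>x. x \<in> lattice n \<epsilon> \<Longrightarrow> w0 \<le> 4 * w x"
    using weights_facts[OF e(1) K1 r] unfolding w0_def w_def by auto
  have finL: "finite (lattice n \<epsilon>)" by (rule finite_lattice[OF e(1)])
  have finC: "finite C" unfolding C_def using finL by simp
  have CL: "C \<subseteq> lattice n \<epsilon>" unfolding C_def by auto
  have p_eq: "(\<Sum>x\<in>C. stat_dist n r \<epsilon> x) = (\<Sum>x\<in>C. w x) / W"
    unfolding stat_dist_def w_def W_def sum_divide_distrib ..
  have W_up: "W \<le> real (card (lattice n \<epsilon>)) * (4 * w0)"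
  proof -
    have "(\<Sum>y\<in>lattice n \<epsilon>. w y) \<le> (\<Sum>y\<in>lattice n \<epsilon>. 4 * w0)"
    proof (rule sum_mono)
      fix x assume "x \<in> lattice n \<epsilon>" then show "w x \<le> 4 * w0" using wf(2) by blast
    qed
    then show ?thesis unfolding W_def by simp
  qed
  have W_low: "real (card (lattice n \<epsilon>)) * (w0 / 4) \<le> W"
  proof -
    have "(\<Sum>y\<in>lattice n \<epsilon>. w0 / 4) \<le> (\<Sum>y\<in>lattice n \<epsilon>. w y)"
    proof (rule sum_mono)
      fix x assume "x \<in> lattice n \<epsilon>" then show "w0 / 4 \<le> w x" using wf(3)[of x] by linarith
    qed
    then show ?thesis unfolding W_def by simp
  qed
  have SC_up: "(\<Sum>x\<in>C. w x) \<le> real (card C) * (4 * w0)"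
  proof -
    have "(\<Sum>y\<in>C. w y) \<le> (\<Sum>y\<in>C. 4 * w0)"
    proof (rule sum_mono)
      fix x assume "x \<in> C" then show "w x \<le> 4 * w0" using wf(2) CL by blast
    qed
    then show ?thesis by simp
  qed
  have SC_low: "real (card C) * (w0 / 4) \<le> (\<Sum>x\<in>C. w x)"
  proof -
    have "(\<Sum>y\<in>C. w0 / 4) \<le> (\<Sum>y\<in>C. w y)"
    proof (rule sum_mono)
      fix x assume "x \<in> C" then have "x \<in> lattice n \<epsilon>" using CL by blast
      then show "w0 / 4 \<le> w x" using wf(3)[of x] by linarith
    qed
    then show ?thesis by simp
  qed
  have "Y^2 > 0" using Yge sn by simp
  then have cLp: "real (card (lattice n \<epsilon>)) > 0" using cL_low by linarith
  have "real (card (lattice n \<epsilon>)) * (w0 / 4) > 0" using cLp wf(1) by simp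
  then have Wp: "W > 0" using W_low by linarith
  have p_low: "real (card C) / (16 * real (card (lattice n \<epsilon>))) \<le> (\<Sum>x\<in>C. stat_dist n r \<epsilon> x)"
  proof -
    have "real (card C) * (w0 / 4) / (real (card (lattice n \<epsilon>)) * (4 * w0)) \<le> (\<Sum>x\<in>C. w x) / W"
      by (rule frac_le) (use SC_low W_up Wp wf(1) in \<open>auto simp: w_def sum_nonneg\<close>)
    moreover have "real (card C) * (w0 / 4) / (real (card (lattice n \<epsilon>)) * (4 * w0))
        = real (card C) / (16 * real (card (lattice n \<epsilon>)))" using wf(1) by (simp add: field_simps)
    ultimately show ?thesis using p_eq by simp
  qed
  have p_up: "(\<Sum>x\<in>C. stat_dist n r \<epsilon> x) \<le> 16 * real (card C) / real (card (lattice n \<epsilon>))"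
  proof -
    have "(\<Sum>x\<in>C. w x) / W \<le> real (card C) * (4 * w0) / (real (card (lattice n \<epsilon>)) * (w0 / 4))"
      by (rule frac_le) (use SC_up W_low cLp wf(1) in auto)
    moreover have "real (card C) * (4 * w0) / (real (card (lattice n \<epsilon>)) * (w0 / 4))
        = 16 * real (card C) / real (card (lattice n \<epsilon>))" using wf(1) by (simp add: field_simps)
    ultimately show ?thesis using p_eq by simp
  qed
  have XY: "X^2 / Y^2 = s^2 / real n" unfolding X_def Y_def using e n0
    by (simp add: power_divide field_simps)
  have Yp: "Y > 0" using Yge sn by linarith
  have low: "R^2 / 4096 \<le> real n * (\<Sum>x\<in>C. stat_dist n r \<epsilon> x)"
  proof -
    have "(X^2 / 4) / (16 * (4 * Y^2)) \<le> real (card C) / (16 * real (card (lattice n \<epsilon>)))"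
      by (rule frac_le) (use cC_low cL_up cLp Yp in auto)
    then have "(X^2 / Y^2) / 256 \<le> (\<Sum>x\<in>C. stat_dist n r \<epsilon> x)" using p_low by (simp add: field_simps)
    then have "s^2 / 256 \<le> real n * (\<Sum>x\<in>C. stat_dist n r \<epsilon> x)" unfolding XY using n0
      by (simp add: field_simps)
    moreover have "(R / 4)^2 \<le> s^2" using s_low R by (intro power_mono) auto
    ultimately show ?thesis by (simp add: power_divide)
  qed
  have up: "real n * (\<Sum>x\<in>C. stat_dist n r \<epsilon> x) \<le> 16 * R^2"
  proof -
    have "16 * real (card C) / real (card (lattice n \<epsilon>)) \<le> 16 * (4 * X^2) / Y^2"
      by (rule frac_le) (use cC_up cL_low Yp in auto)
    then have "(\<Sum>x\<in>C. stat_dist n r \<epsilon> x) \<le> 64 * (X^2 / Y^2)" using p_up by (simp add: field_simps)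
    then have "real n * (\<Sum>x\<in>C. stat_dist n r \<epsilon> x) \<le> 64 * s^2" unfolding XY using n0
      by (simp add: field_simps)
    moreover have "s^2 \<le> (R / 2)^2" using s_up s_low R by (intro power_mono) auto
    ultimately show ?thesis by (simp add: power_divide)
  qed
  show ?thesis using low up unfolding C_def by blast
qed




lemma num_cells_bound:
  assumes R: "300 \<le> R" "R \<le> sqrt (real n)"
  shows "real (num_cells n R) \<le> 4 * sqrt (real n)"
proof -
  define x0 where "x0 = sqrt (5 * real n) / R"
  have sn: "sqrt (real n) \<ge> 300" using R by linarith
  have x0p: "x0 \<ge> 0" unfolding x0_def using R by simp
  have mdef: "real (num_cells n R) = real_of_int \<lceil>x0\<rceil>" unfolding num_cells_def x0_def[symmetric]
    using x0p by simp
  have mx: "real (num_cells n R) < x0 + 1" unfolding mdef using ceiling_correct[of x0] by linarith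
  have sq5b: "sqrt (5::real) \<le> 3" by (rule real_le_lsqrt) simp_all
  have "sqrt (5 * real n) = sqrt 5 * sqrt (real n)" by (simp add: real_sqrt_mult)
  also have "\<dots> \<le> 3 * sqrt (real n)" using sq5b by (intro mult_right_mono) auto
  finally have "x0 \<le> 3 * sqrt (real n) / R" unfolding x0_def using R by (intro divide_right_mono) auto
  also have "\<dots> \<le> 3 * sqrt (real n) / 1" using R sn by (intro divide_left_mono) auto
  finally show ?thesis using mx sn by linarith
qed

lemma main_fixed:
  fixes n :: nat and r \<epsilon> R :: real and cell :: "real \<times> real \<Rightarrow> nat \<times> nat"
  assumes n6: "6 \<le> n"
  and H: "r \<ge> 0 \<and> 0 < \<epsilon> \<and> \<epsilon> \<le> 1 \<and> \<epsilon> < R \<and>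
       300 * sqrt (ln (real n)) \<le> R \<and> R \<le> sqrt (real n) \<and>
       valid_assignment n \<epsilon> (num_cells n R) cell"
  shows "config_prob n r \<epsilon> (\<lambda>P. \<forall>a<num_cells n R. \<forall>b<num_cells n R.
                R^2 / 16384 \<le> real (cell_count n cell P (a, b)) \<and>
                real (cell_count n cell P (a, b)) \<le> 16384 * R^2) \<ge> 1 - 1 / (real n)^2"
proof -
  have r: "r \<ge> 0" and e: "0 < \<epsilon>" "\<epsilon> \<le> 1" and Rc: "300 * sqrt (ln (real n)) \<le> R"
    and Rn: "R \<le> sqrt (real n)" and valid: "valid_assignment n \<epsilon> (num_cells n R) cell" using H by auto
  have n6r: "real n \<ge> 6" using n6 by simp
  have ln1: "ln (real n) \<ge> 1"
  proof -
    have "exp 1 \<le> real n" using exp_le n6r by linarith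
    then show ?thesis using n6r by (subst ln_ge_iff) auto
  qed
  have "sqrt (ln (real n)) \<ge> 1" using ln1 by simp
  then have R300: "R \<ge> 300" using Rc by linarith
  have R2: "R^2 \<ge> 90000 * ln (real n)"
  proof -
    have "(300 * sqrt (ln (real n)))^2 \<le> R^2" using Rc ln1 by (intro power_mono) auto
    then show ?thesis using ln1 by (simp add: power_mult_distrib)
  qed
  define L where "L = lattice n \<epsilon>"
  define \<pi> where "\<pi> = stat_dist n r \<epsilon>"
  define \<Omega> where "\<Omega> = PiE {..<n} (\<lambda>_. L)"
  define wt where "wt P = (\<Prod>i<n. \<pi> (P i))" for P :: "nat \<Rightarrow> real \<times> real"
  define m where "m = num_cells n R"
  define lam :: real where "lam = 16384"
  define cnt where "cnt P ab = real (card {i\<in>{..<n}. cell (P i) = ab})" for P :: "nat \<Rightarrow> real \<times> real" and ab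
  define S where "S = ({..<m} \<times> {..<m}) \<times> (UNIV :: bool set)"
  define E where "E s P = (if snd s then lam * R^2 < cnt P (fst s) else cnt P (fst s) < R^2 / lam)"
    for s :: "(nat \<times> nat) \<times> bool" and P
  have finL: "finite L" unfolding L_def by (rule finite_lattice[OF e(1)])
  have tot: "(\<Sum>x\<in>L. \<pi> x) = 1" unfolding L_def \<pi>_def by (rule stat_sum(1)[OF e(1) r])
  have nn: "\<And>x. x \<in> L \<Longrightarrow> \<pi> x \<ge> 0" unfolding \<pi>_def using stat_sum(2)[OF e(1) r] by blast
  have finO: "finite \<Omega>" unfolding \<Omega>_def using finL by (simp add: finite_PiE)
  have wt0: "wt P \<ge> 0" if "P \<in> \<Omega>" for P
    using wt_nonneg[OF nn that[unfolded \<Omega>_def]] unfolding wt_def .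
  have totO: "(\<Sum>P\<in>\<Omega>. wt P) = 1" unfolding \<Omega>_def wt_def
    using sum_PiE_prod_pow[OF finL, where n=n and f=\<pi>] unfolding tot by simp
  define B where "B = exp (- (R^2 / 16384))"
  have Eb: "(\<Sum>P\<in>{P\<in>\<Omega>. E s P}. wt P) \<le> B" if s: "s \<in> S" for s
  proof -
    obtain a b t where sab: "s = ((a,b),t)" by (metis prod.exhaust)
    have ab: "a < num_cells n R" "b < num_cells n R" using s unfolding sab S_def m_def by auto
    define p where "p = (\<Sum>x\<in>{x\<in>L. cell x = (a,b)}. \<pi> x)"
    have pb: "R^2 / 4096 \<le> real n * p \<and> real n * p \<le> 16 * R^2"
      unfolding p_def L_def \<pi>_def by (rule cell_prob[OF e r R300 Rn valid ab])
    show ?thesis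
    proof (cases t)
      case True
      have "(\<Sum>P\<in>{P\<in>\<Omega>. E s P}. wt P)
          = (\<Sum>P\<in>{P\<in>PiE {..<n} (\<lambda>_. L). lam * R^2 < real (card {i\<in>{..<n}. cell (P i) = (a,b)})}. \<Prod>i<n. \<pi> (P i))"
        using True by (simp add: E_def sab \<Omega>_def wt_def cnt_def)
      also have "\<dots> \<le> exp (2 * real n * p - lam * R^2)"
        unfolding p_def by (rule tail_upper[OF finL nn tot])
      also have "\<dots> \<le> B" unfolding B_def
      proof (rule exp_le_cancel_iff[THEN iffD2])
        show "2 * real n * p - lam * R^2 \<le> - (R^2 / 16384)" using pb unfolding lam_def by simp
      qed
      finally show ?thesis .
    next
      case False
      have "(\<Sum>P\<in>{P\<in>\<Omega>. E s P}. wt P)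
          = (\<Sum>P\<in>{P\<in>PiE {..<n} (\<lambda>_. L). real (card {i\<in>{..<n}. cell (P i) = (a,b)}) < R^2 / lam}. \<Prod>i<n. \<pi> (P i))"
        using False by (simp add: E_def sab \<Omega>_def wt_def cnt_def)
      also have "\<dots> \<le> exp (R^2 / lam - real n * p / 2)"
        unfolding p_def by (rule tail_lower[OF finL nn tot])
      also have "\<dots> \<le> B" unfolding B_def
      proof (rule exp_le_cancel_iff[THEN iffD2])
        show "R^2 / lam - real n * p / 2 \<le> - (R^2 / 16384)" using pb unfolding lam_def by simp
      qed
      finally show ?thesis .
    qed
  qed
  have Bn: "B \<le> 1 / real n ^ 5"
  proof -
    have "B \<le> exp (- (5 * ln (real n)))" unfolding B_def using R2 ln1 by simp
    also have "exp (- (5 * ln (real n))) = 1 / real n ^ 5"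
    proof -
      have "exp (real 5 * ln (real n)) = exp (ln (real n)) ^ 5" by (rule exp_of_nat_mult)
      also have "\<dots> = real n ^ 5" using n6r by simp
      finally show ?thesis by (simp add: exp_minus field_simps)
    qed
    finally show ?thesis .
  qed
  have finS: "finite S" unfolding S_def by simp
  have cardS: "real (card S) \<le> 32 * real n"
  proof -
    have "card S = m * m * 2" unfolding S_def by (simp add: card_cartesian_product)
    then have "real (card S) = 2 * (real m)^2" by (simp add: power2_eq_square)
    also have "(real m)^2 \<le> (4 * sqrt (real n))^2"
      using num_cells_bound[OF R300 Rn] unfolding m_def by (intro power_mono) auto
    also have "\<dots> = 16 * real n" by (simp add: power_mult_distrib)
    finally show ?thesis by simp
  qed
  have bad: "(\<Sum>P\<in>{P\<in>\<Omega>. \<exists>s\<in>S. E s P}. wt P) \<le> 32 * real n / real n ^ 5"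
  proof -
    have "(\<Sum>P\<in>{P\<in>\<Omega>. \<exists>s\<in>S. E s P}. wt P) \<le> (\<Sum>s\<in>S. \<Sum>P\<in>{P\<in>\<Omega>. E s P}. wt P)"
      by (rule union_bound_sum[OF finS finO wt0])
    also have "\<dots> \<le> (\<Sum>s\<in>S. 1 / real n ^ 5)"
      by (rule sum_mono) (use Eb Bn in force)
    also have "\<dots> = real (card S) / real n ^ 5" by simp
    also have "\<dots> \<le> 32 * real n / real n ^ 5" using cardS n6r by (intro divide_right_mono) auto
    finally show ?thesis .
  qed
  have good_eq: "{P\<in>\<Omega>. \<forall>a<m. \<forall>b<m. R^2 / lam \<le> cnt P (a,b) \<and> cnt P (a,b) \<le> lam * R^2}
      = \<Omega> - {P\<in>\<Omega>. \<exists>s\<in>S. E s P}"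
  proof (rule set_eqI)
    fix P
    have eqv: "(\<exists>s\<in>S. E s P) \<longleftrightarrow> (\<exists>a<m. \<exists>b<m. \<not> (R^2 / lam \<le> cnt P (a,b) \<and> cnt P (a,b) \<le> lam * R^2))"
    proof
      assume "\<exists>s\<in>S. E s P"
      then obtain a b t where abt: "a < m" "b < m" "E ((a,b),t) P" unfolding S_def by auto
      have "\<not> (R^2 / lam \<le> cnt P (a,b) \<and> cnt P (a,b) \<le> lam * R^2)"
        using abt(3) by (cases t) (auto simp: E_def)
      then show "\<exists>a<m. \<exists>b<m. \<not> (R^2 / lam \<le> cnt P (a,b) \<and> cnt P (a,b) \<le> lam * R^2)"
        using abt(1,2) by blast
    next
      assume "\<exists>a<m. \<exists>b<m. \<not> (R^2 / lam \<le> cnt P (a,b) \<and> cnt P (a,b) \<le> lam * R^2)"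
      then obtain a b where ab: "a < m" "b < m" and nb: "\<not> (R^2 / lam \<le> cnt P (a,b) \<and> cnt P (a,b) \<le> lam * R^2)"
        by blast
      show "\<exists>s\<in>S. E s P"
      proof (cases "lam * R^2 < cnt P (a,b)")
        case True
        then have "E ((a,b),True) P" by (simp add: E_def)
        moreover have "((a,b),True) \<in> S" using ab unfolding S_def by simp
        ultimately show ?thesis by blast
      next
        case False
        then have "cnt P (a,b) < R^2 / lam" using nb by linarith
        then have "E ((a,b),False) P" by (simp add: E_def)
        moreover have "((a,b),False) \<in> S" using ab unfolding S_def by simp
        ultimately show ?thesis by blast
      qed
    qed
    show "P \<in> {P\<in>\<Omega>. \<forall>a<m. \<forall>b<m. R^2 / lam \<le> cnt P (a,b) \<and> cnt P (a,b) \<le> lam * R^2}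
      \<longleftrightarrow> P \<in> \<Omega> - {P\<in>\<Omega>. \<exists>s\<in>S. E s P}"
      using eqv by blast
  qed
  have "config_prob n r \<epsilon> (\<lambda>P. \<forall>a<num_cells n R. \<forall>b<num_cells n R.
                R^2 / 16384 \<le> real (cell_count n cell P (a, b)) \<and>
                real (cell_count n cell P (a, b)) \<le> 16384 * R^2)
      = (\<Sum>P\<in>{P\<in>\<Omega>. \<forall>a<m. \<forall>b<m. R^2 / lam \<le> cnt P (a,b) \<and> cnt P (a,b) \<le> lam * R^2}. wt P)"
    unfolding config_prob_def \<Omega>_def wt_def \<pi>_def L_def m_def lam_def cnt_def cell_count_def by simp
  also have "\<dots> = (\<Sum>P\<in>\<Omega>. wt P) - (\<Sum>P\<in>{P\<in>\<Omega>. \<exists>s\<in>S. E s P}. wt P)"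
    unfolding good_eq by (rule sum_diff) (use finO in auto)
  also have "\<dots> \<ge> 1 - 32 * real n / real n ^ 5" using totO bad by simp
  finally have main: "config_prob n r \<epsilon> (\<lambda>P. \<forall>a<num_cells n R. \<forall>b<num_cells n R.
                R^2 / 16384 \<le> real (cell_count n cell P (a, b)) \<and>
                real (cell_count n cell P (a, b)) \<le> 16384 * R^2) \<ge> 1 - 32 * real n / real n ^ 5" .
  have "32 * real n / real n ^ 5 \<le> 1 / (real n)^2"
  proof -
    have "32 * real n / real n ^ 5 = 32 / real n ^ 4" using n6r by (simp add: field_simps power_eq_if)
    also have "\<dots> \<le> 1 / real n ^ 2"
    proof -
      have "(6::real)^2 \<le> real n ^ 2" using n6r by (intro power_mono) auto
      then have "32 \<le> real n ^ 2" by simp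
      then show ?thesis using n6r by (simp add: field_simps power_eq_if)
    qed
    finally show ?thesis .
  qed
  then show ?thesis using main by linarith
qed

theorem mainTheorem4:
  shows "\<exists>c::real. c > 0 \<and> (\<exists>lam::real. lam \<ge> 1 \<and> (\<exists>N::nat. \<forall>n\<ge>N.
     \<forall>(r::real) (\<epsilon>::real) (R::real) cell.
       r \<ge> 0 \<and> 0 < \<epsilon> \<and> \<epsilon> \<le> 1 \<and> \<epsilon> < R \<and>
       c * sqrt (ln (real n)) \<le> R \<and> R \<le> sqrt (real n) \<and>
       valid_assignment n \<epsilon> (num_cells n R) cell \<longrightarrow>
       config_prob n r \<epsilon>
         (\<lambda>P. \<forall>a<num_cells n R. \<forall>b<num_cells n R.
                R^2 / lam \<le> real (cell_count n cell P (a, b)) \<and>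
                real (cell_count n cell P (a, b)) \<le> lam * R^2)
       \<ge> 1 - 1 / (real n)^2))"
  apply (rule exI[of _ 300])
  apply (rule conjI)
   apply simp
  apply (rule exI[of _ 16384])
  apply (rule conjI)
   apply simp
  apply (rule exI[of _ 6])
  apply (intro allI impI)
  apply (erule (1) main_fixed)
  done


end
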